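(* Let $g:A\to Y$ and $h:B\to Y$ be injective relations. Every synchronisation $\sigma$ of $(g,h)$ is the disjoint union of the paths it contains: $\sigma=\bigcup\{\gamma\subseteq\sigma:\gamma\text{ is a path}\}$, the paths in this union being pairwise disjoint; in particular every element of $\sigma$ (viewed as a subset of $A+B$) lies in a unique path, and that path is contained in $\sigma$.
   Context: A binary relation $R:A\to Z$ is injective if $aRz$ and $a'Rz$ imply $a=a'$; for $\alpha\subseteq A$, $R(\alpha)=\{z: aRz\text{ for some }a\in\alpha\}$. Given injective relations $g:A\to Y$ and $h:B\to Y$, a synchronisation is a pair $\langle\alpha,\beta\rangle$ with $\alpha\subseteq A$, $\beta\subseteq B$ and $g(\alpha)=h(\beta)$; such pairs are identified with subsets $\alpha+\beta$ of the disjoint union $A+B$, and inclusion, intersection, union and emptiness are taken via this identification. A path is a non-empty synchronisation that is minimal with respect to inclusion among non-empty synchronisations. *)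

theory Defs
  imports Main
begin

definition injective_rel :: "('a \<times> 'z) set \<Rightarrow> bool" where
  "injective_rel R \<longleftrightarrow> (\<forall>a a' z. (a, z) \<in> R \<and> (a', z) \<in> R \<longrightarrow> a = a')"

text \<open>A synchronisation, identified with the subset alpha + beta of the disjoint union A + B.\<close>
definition sync :: "('a \<times> 'y) set \<Rightarrow> ('b \<times> 'y) set \<Rightarrow> ('a + 'b) set \<Rightarrow> bool" where
  "sync g h S \<longleftrightarrow> g `` {a. Inl a \<in> S} = h `` {b. Inr b \<in> S}"

definition path :: "('a \<times> 'y) set \<Rightarrow> ('b \<times> 'y) set \<Rightarrow> ('a + 'b) set \<Rightarrow> bool" where
  "path g h S \<longleftrightarrow> sync g h S \<and> S \<noteq> {} \<and>
     (\<forall>T. sync g h T \<and> T \<noteq> {} \<and> T \<subseteq> S \<longrightarrow> T = S)"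

end

theory Submission
  imports Defs
begin

lemma sync_Inter:
  assumes ig: "injective_rel g" and ih: "injective_rel h"
    and F: "F \<noteq> {}" "\<And>T. T \<in> F \<Longrightarrow> sync g h T"
  shows "sync g h (\<Inter>F)"
  unfolding sync_def
proof (rule set_eqI, rule iffI)
  fix y assume "y \<in> g `` {a. Inl a \<in> \<Inter>F}"
  then obtain a where a: "(a,y) \<in> g" "\<forall>T\<in>F. Inl a \<in> T" by auto
  have "\<forall>T\<in>F. \<exists>b. Inr b \<in> T \<and> (b,y) \<in> h"
  proof
    fix T assume "T \<in> F"
    hence "y \<in> h `` {b. Inr b \<in> T}" using F(2)[of T] a unfolding sync_def by blast
    thus "\<exists>b. Inr b \<in> T \<and> (b,y) \<in> h" by auto
  qed
  moreover obtain T0 where "T0 \<in> F" using F by auto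
  ultimately obtain b where b: "(b,y) \<in> h" by blast
  have "\<forall>T\<in>F. Inr b \<in> T"
    using \<open>\<forall>T\<in>F. \<exists>b. Inr b \<in> T \<and> (b,y) \<in> h\<close> b ih unfolding injective_rel_def by blast
  thus "y \<in> h `` {b. Inr b \<in> \<Inter>F}" using b by auto
next
  fix y assume "y \<in> h `` {b. Inr b \<in> \<Inter>F}"
  then obtain b where b: "(b,y) \<in> h" "\<forall>T\<in>F. Inr b \<in> T" by auto
  have "\<forall>T\<in>F. \<exists>a. Inl a \<in> T \<and> (a,y) \<in> g"
  proof
    fix T assume "T \<in> F"
    hence "y \<in> g `` {a. Inl a \<in> T}" using F(2)[of T] b unfolding sync_def by blast
    thus "\<exists>a. Inl a \<in> T \<and> (a,y) \<in> g" by auto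
  qed
  moreover obtain T0 where "T0 \<in> F" using F by auto
  ultimately obtain a where a: "(a,y) \<in> g" by blast
  have "\<forall>T\<in>F. Inl a \<in> T"
    using \<open>\<forall>T\<in>F. \<exists>a. Inl a \<in> T \<and> (a,y) \<in> g\<close> a ig unfolding injective_rel_def by blast
  thus "y \<in> g `` {a. Inl a \<in> \<Inter>F}" using a by auto
qed

lemma img_diff:
  assumes "injective_rel g"
  shows "g `` {a. a \<in> S \<and> a \<notin> T} = g `` S - g `` T"
  using assms unfolding injective_rel_def by blast

lemma sync_diff:
  assumes ig: "injective_rel g" and ih: "injective_rel h"
    and S: "sync g h S" and T: "sync g h T"
  shows "sync g h (S - T)"
proof -
  have "g `` {a. Inl a \<in> S - T} = g `` {a. Inl a \<in> S} - g `` {a. Inl a \<in> T}"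
    using img_diff[OF ig, of "{a. Inl a \<in> S}" "{a. Inl a \<in> T}"] by simp
  moreover have "h `` {b. Inr b \<in> S - T} = h `` {b. Inr b \<in> S} - h `` {b. Inr b \<in> T}"
    using img_diff[OF ih, of "{b. Inr b \<in> S}" "{b. Inr b \<in> T}"] by simp
  ultimately show ?thesis using S T unfolding sync_def by simp
qed

definition C where "C g h x = \<Inter>{T. sync g h T \<and> x \<in> T}"

lemma C_path:
  assumes ig: "injective_rel g" and ih: "injective_rel h"
    and S: "sync g h S" and x: "x \<in> S"
  shows "path g h (C g h x)" "C g h x \<subseteq> S"
proof -
  have sC: "sync g h (C g h x)" unfolding C_def
    by (rule sync_Inter[OF ig ih]) (use S x in auto)
  have xC: "x \<in> C g h x" unfolding C_def by auto
  show "C g h x \<subseteq> S" unfolding C_def using S x by auto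
  show "path g h (C g h x)" unfolding path_def
  proof (intro conjI allI impI)
    fix T assume T: "sync g h T \<and> T \<noteq> {} \<and> T \<subseteq> C g h x"
    show "T = C g h x"
    proof (cases "x \<in> T")
      case True
      hence "C g h x \<subseteq> T" unfolding C_def using T by auto
      thus ?thesis using T by auto
    next
      case False
      have "sync g h (C g h x - T)" using sync_diff[OF ig ih sC] T by blast
      hence "C g h x \<subseteq> C g h x - T" using xC False unfolding C_def by blast
      thus ?thesis using T by blast
    qed
  qed (use sC xC in auto)
qed

lemma path_eq_C:
  assumes ig: "injective_rel g" and ih: "injective_rel h"
    and P: "path g h P" and x: "x \<in> P"
  shows "P = C g h x"
proof -
  have sP: "sync g h P" using P unfolding path_def by auto
  have "C g h x \<subseteq> P" using C_path(2)[OF ig ih sP x] .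
  moreover have "path g h (C g h x)" using C_path(1)[OF ig ih sP x] .
  ultimately show ?thesis using P unfolding path_def by auto
qed

theorem mainTheorem8:
  fixes g :: "('a \<times> 'y) set" and h :: "('b \<times> 'y) set" and \<sigma> :: "('a + 'b) set"
  assumes "injective_rel g" and "injective_rel h" and "sync g h \<sigma>"
  shows "\<sigma> = \<Union>{\<gamma>. \<gamma> \<subseteq> \<sigma> \<and> path g h \<gamma>} \<and>
         (\<forall>\<gamma>1 \<gamma>2. \<gamma>1 \<subseteq> \<sigma> \<and> path g h \<gamma>1 \<and> \<gamma>2 \<subseteq> \<sigma> \<and> path g h \<gamma>2 \<and> \<gamma>1 \<noteq> \<gamma>2
             \<longrightarrow> \<gamma>1 \<inter> \<gamma>2 = {}) \<and>
         (\<forall>x\<in>\<sigma>. (\<exists>!\<gamma>. path g h \<gamma> \<and> x \<in> \<gamma>) \<and> (\<forall>\<gamma>. path g h \<gamma> \<and> x \<in> \<gamma> \<longrightarrow> \<gamma> \<subseteq> \<sigma>))"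
proof (intro conjI ballI allI impI)
  have "\<And>x. x \<in> \<sigma> \<Longrightarrow> x \<in> \<Union>{\<gamma>. \<gamma> \<subseteq> \<sigma> \<and> path g h \<gamma>}"
  proof -
    fix x assume x: "x \<in> \<sigma>"
    have "x \<in> C g h x" unfolding C_def by auto
    thus "x \<in> \<Union>{\<gamma>. \<gamma> \<subseteq> \<sigma> \<and> path g h \<gamma>}"
      using C_path[OF assms x] by blast
  qed
  thus "\<sigma> = \<Union>{\<gamma>. \<gamma> \<subseteq> \<sigma> \<and> path g h \<gamma>}" by blast
next
  fix \<gamma>1 \<gamma>2
  assume a: "\<gamma>1 \<subseteq> \<sigma> \<and> path g h \<gamma>1 \<and> \<gamma>2 \<subseteq> \<sigma> \<and> path g h \<gamma>2 \<and> \<gamma>1 \<noteq> \<gamma>2"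
  show "\<gamma>1 \<inter> \<gamma>2 = {}"
  proof (rule ccontr)
    assume "\<gamma>1 \<inter> \<gamma>2 \<noteq> {}"
    then obtain y where "y \<in> \<gamma>1" "y \<in> \<gamma>2" by auto
    thus False using path_eq_C[OF assms(1,2)] a by metis
  qed
next
  fix x assume x: "x \<in> \<sigma>"
  have xC: "x \<in> C g h x" unfolding C_def by auto
  show "\<exists>!\<gamma>. path g h \<gamma> \<and> x \<in> \<gamma>"
    using C_path(1)[OF assms x] xC path_eq_C[OF assms(1,2)] by blast
next
  fix x \<gamma> assume x: "x \<in> \<sigma>" and p: "path g h \<gamma> \<and> x \<in> \<gamma>"
  show "\<gamma> \<subseteq> \<sigma>" using path_eq_C[OF assms(1,2)] p C_path(2)[OF assms x] by blast
qed

end
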